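(* Let $\alpha_1,\alpha_2,\alpha_3,\alpha_4\in\mathcal{O}^\times$. Then $$\min\{v(\alpha_1+\alpha_2-\alpha_3-\alpha_4),\,v(\alpha_1^{-1}+\alpha_2^{-1}-\alpha_3^{-1}-\alpha_4^{-1})\}\le v(\alpha_1^l+\alpha_2^l-\alpha_3^l-\alpha_4^l)$$ for all odd integers $l$. If additionally $\alpha_1+\alpha_2\in\mathcal{O}^\times$, then this holds for all integers $l$.
   Context: $F$ is a non-archimedean local field of characteristic $0$ and odd residue characteristic, $\mathcal{O}$ its ring of integers, $v$ its normalised valuation with $v(0)=\infty$. *)

theory Defs
  imports Complex_Main "HOL-Library.Extended_Real"
begin

definition normalised_discrete_valuation :: "('a::field \<Rightarrow> ereal) \<Rightarrow> bool" where
  "normalised_discrete_valuation v \<longleftrightarrow>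
     v 0 = \<infinity> \<and>
     (\<forall>x. x \<noteq> 0 \<longrightarrow> (\<exists>n::int. v x = ereal (of_int n))) \<and>
     (\<forall>x y. v (x * y) = v x + v y) \<and>
     (\<forall>x y. min (v x) (v y) \<le> v (x + y)) \<and>
     (\<forall>n::int. \<exists>x. v x = ereal (of_int n))"

definition val_complete :: "('a::field \<Rightarrow> ereal) \<Rightarrow> bool" where
  "val_complete v \<longleftrightarrow>
     (\<forall>s::nat \<Rightarrow> 'a.
        (\<forall>N::int. \<exists>M. \<forall>m\<ge>M. \<forall>n\<ge>M. ereal (of_int N) \<le> v (s m - s n)) \<longrightarrow>
        (\<exists>L. \<forall>N::int. \<exists>M. \<forall>n\<ge>M. ereal (of_int N) \<le> v (s n - L)))"

definition val_ring :: "('a::field \<Rightarrow> ereal) \<Rightarrow> 'a set" where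
  "val_ring v = {x. 0 \<le> v x}"

definition val_units :: "('a::field \<Rightarrow> ereal) \<Rightarrow> 'a set" where
  "val_units v = {x. v x = 0}"

definition residue_field :: "('a::field \<Rightarrow> ereal) \<Rightarrow> 'a set set" where
  "residue_field v = val_ring v // {(x, y). x \<in> val_ring v \<and> y \<in> val_ring v \<and> 0 < v (x - y)}"

definition nonarch_local_field :: "('a::field \<Rightarrow> ereal) \<Rightarrow> bool" where
  "nonarch_local_field v \<longleftrightarrow>
     normalised_discrete_valuation v \<and> val_complete v \<and> finite (residue_field v)"

text \<open>Odd residue characteristic: 2 is nonzero in the residue field, i.e. 2 is not in
  the maximal ideal.\<close>
definition odd_residue_char :: "('a::field \<Rightarrow> ereal) \<Rightarrow> bool" where
  "odd_residue_char v \<longleftrightarrow> \<not> (0 < v 2)"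

end

theory Submission
  imports Defs
begin

fun RR :: "nat \<Rightarrow> 'a::comm_ring_1 \<Rightarrow> 'a \<Rightarrow> 'a" where
  "RR 0 p q = 1"
| "RR (Suc 0) p q = p*p - 3*q"
| "RR (Suc (Suc n)) p q = (p*p - 2*q) * RR (Suc n) p q - q*q * RR n p q"

lemma S_rec: "(a::'a::comm_ring_1)^(Suc (Suc k)) + b^(Suc (Suc k))
   = (a+b)*(a^(Suc k)+b^(Suc k)) - (a*b)*(a^k+b^k)"
  by (simp add: algebra_simps)

lemma RR_eq: "(a::'a::comm_ring_1)^(2*n+1) + b^(2*n+1) = (a+b) * RR n (a+b) (a*b)"
proof (induction n rule: induct_nat_012)
  case 0 then show ?case by simp
next
  case 1 then show ?case by (simp add: algebra_simps power2_eq_square power3_eq_cube)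
next
  case (ge2 n)
  have e: "2 * Suc (Suc n) + 1 = Suc (Suc (2*Suc n + 1))" by simp
  have e2: "2 * Suc n + 1 = Suc (Suc (2*n + 1))" by simp
  have "a^(2 * Suc (Suc n) + 1) + b^(2 * Suc (Suc n) + 1)
     = (a*a+b*b) * (a^(2*Suc n+1)+b^(2*Suc n+1)) - (a*b)*(a*b)*(a^(2*n+1)+b^(2*n+1))"
    unfolding e e2 by (simp add: algebra_simps)
  also have "\<dots> = (a+b) * RR (Suc (Suc n)) (a+b) (a*b)"
    using ge2 by (simp add: algebra_simps)
  finally show ?case .
qed

context
  fixes v :: "'a::field \<Rightarrow> ereal"
  assumes nv: "normalised_discrete_valuation v"
begin

lemma v0: "v 0 = \<infinity>" using nv unfolding normalised_discrete_valuation_def by blast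
lemma vfin: "x \<noteq> 0 \<Longrightarrow> \<exists>n::int. v x = ereal (of_int n)"
  using nv unfolding normalised_discrete_valuation_def by blast
lemma vmult: "v (x*y) = v x + v y"
  using nv unfolding normalised_discrete_valuation_def by blast
lemma vadd: "min (v x) (v y) \<le> v (x+y)"
  using nv unfolding normalised_discrete_valuation_def by blast

lemma v1: "v 1 = 0"
proof -
  obtain n where n: "v 1 = ereal (of_int n)" using vfin[of 1] by auto
  have "v 1 = v 1 + v 1" using vmult[of 1 1] by simp
  then show ?thesis using n by simp
qed

lemma vm1: "v (-1) = 0"
proof -
  obtain n where n: "v (-1) = ereal (of_int n)" using vfin[of "-1"] by auto
  have "0 = v (-1) + v (-1)" using vmult[of "-1" "-1"] v1 by simp
  then show ?thesis using n by simp
qed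

lemma vneg: "v (-x) = v x"
  using vmult[of "-1" x] vm1 by simp

lemma vdiff: "min (v x) (v y) \<le> v (x-y)"
  using vadd[of x "-y"] vneg[of y] by simp

lemma Jadd: "m \<le> v x \<Longrightarrow> m \<le> v y \<Longrightarrow> m \<le> v (x+y)"
  using vadd[of x y] by (meson min.boundedI order_trans)
lemma Jdiff: "m \<le> v x \<Longrightarrow> m \<le> v y \<Longrightarrow> m \<le> v (x-y)"
  using vdiff[of x y] by (meson min.boundedI order_trans)
lemma Jmult: "0 \<le> v r \<Longrightarrow> m \<le> v x \<Longrightarrow> m \<le> v (r*x)"
  using add_mono[of 0 "v r" m "v x"] vmult[of r x] by simp
lemma Jmult2: "0 \<le> v r \<Longrightarrow> m \<le> v x \<Longrightarrow> m \<le> v (x*r)"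
  using Jmult[of r m x] by (simp add: mult.commute)
lemma Jzero: "m \<le> v 0" using v0 by simp

lemma Rmult: "0 \<le> v x \<Longrightarrow> 0 \<le> v y \<Longrightarrow> 0 \<le> v (x*y)"
  using Jmult by blast
lemma Rpow: "0 \<le> v x \<Longrightarrow> 0 \<le> v (x^n)"
  by (induction n) (auto simp: v1 Rmult)
lemma Rnat: "0 \<le> v (of_nat n)"
  by (induction n) (auto simp: v1 v0 intro!: Jadd)
lemma Rnum: "0 \<le> v (numeral n)"
  using Rnat[of "numeral n"] by simp

lemma RR_R: "0 \<le> v p \<Longrightarrow> 0 \<le> v q \<Longrightarrow> 0 \<le> v (RR n p q)"
  by (induction n p q rule: RR.induct)
     (auto simp: v1 intro!: Jdiff Jmult Rmult Rnum)

lemma units_inv: "v x = 0 \<Longrightarrow> v (inverse x) = 0"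
proof -
  assume a: "v x = 0"
  then have "x \<noteq> 0" using v0 by auto
  then have "v x + v (inverse x) = 0" using vmult[of x "inverse x"] v1 by simp
  with a show ?thesis by simp
qed

lemma Radd: "0 \<le> v x \<Longrightarrow> 0 \<le> v y \<Longrightarrow> 0 \<le> v (x+y)" by (rule Jadd)
lemma Rdiff: "0 \<le> v x \<Longrightarrow> 0 \<le> v y \<Longrightarrow> 0 \<le> v (x-y)" by (rule Jdiff)

lemma unit_case:
  assumes Ra: "0 \<le> v a" and Rb: "0 \<le> v b" and Rc: "0 \<le> v c" and Rd: "0 \<le> v d"
    and hp: "m \<le> v ((a+b)-(c+d))" and hq: "m \<le> v (a*b - c*d)"
  shows "m \<le> v ((a^k+b^k) - (c^k+d^k)) \<and> m \<le> v ((a^Suc k+b^Suc k) - (c^Suc k+d^Suc k))"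
proof (induction k)
  case 0 then show ?case using hp by (simp add: v0)
next
  case (Suc k)
  have id: "(a^Suc (Suc k)+b^Suc (Suc k)) - (c^Suc (Suc k)+d^Suc (Suc k))
     = (a+b) * ((a^Suc k+b^Suc k) - (c^Suc k+d^Suc k)) + (c^Suc k+d^Suc k) * ((a+b)-(c+d))
       - ((a*b) * ((a^k+b^k) - (c^k+d^k)) + (c^k+d^k) * (a*b - c*d))"
    by (simp add: algebra_simps)
  have r1: "0 \<le> v (a+b)" "0 \<le> v (a*b)" using Ra Rb by (auto intro: Radd Rmult)
  have r2: "0 \<le> v (c^n+d^n)" for n using Rc Rd by (auto intro: Radd Rpow)
  have IH1: "m \<le> v ((a^k+b^k) - (c^k+d^k))" and IH2: "m \<le> v ((a^Suc k+b^Suc k) - (c^Suc k+d^Suc k))"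
    using Suc.IH by blast+
  have t1: "m \<le> v ((a+b) * ((a^Suc k+b^Suc k) - (c^Suc k+d^Suc k)))" by (rule Jmult[OF r1(1) IH2])
  have t2: "m \<le> v ((c^Suc k+d^Suc k) * ((a+b)-(c+d)))" by (rule Jmult[OF r2 hp])
  have t3: "m \<le> v ((a*b) * ((a^k+b^k) - (c^k+d^k)))" by (rule Jmult[OF r1(2) IH1])
  have t4: "m \<le> v ((c^k+d^k) * (a*b - c*d))" by (rule Jmult[OF r2 hq])
  have "m \<le> v ((a^Suc (Suc k)+b^Suc (Suc k)) - (c^Suc (Suc k)+d^Suc (Suc k)))"
    unfolding id by (rule Jdiff[OF Jadd[OF t1 t2] Jadd[OF t3 t4]])
  then show ?case using IH2 by blast
qed

lemma E_lemma:
  assumes R1: "0 \<le> v p1" "0 \<le> v q1" and R2: "0 \<le> v p2" "0 \<le> v q2"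
    and hp: "m \<le> v (p1-p2)" and hq: "m \<le> v (p2*(q1-q2))"
  shows "m \<le> v (p2*(RR n p1 q1 - RR n p2 q2))"
proof (induction n rule: induct_nat_012)
  case 0 then show ?case by (simp add: v0)
next
  case 1
  have id: "p2*(RR (Suc 0) p1 q1 - RR (Suc 0) p2 q2) = ((p1+p2)*p2)*(p1-p2) - 3*(p2*(q1-q2))"
    by (simp add: algebra_simps)
  have a: "0 \<le> v ((p1+p2)*p2)" using R1 R2 by (intro Rmult Radd)
  show ?case unfolding id by (rule Jdiff[OF Jmult[OF a hp] Jmult[OF Rnum hq]])
next
  case (ge2 n)
  have id: "p2*(RR (Suc (Suc n)) p1 q1 - RR (Suc (Suc n)) p2 q2)
    = (p1*p1-2*q1)*(p2*(RR (Suc n) p1 q1 - RR (Suc n) p2 q2))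
      + (((p1+p2)*p2)*(p1-p2) - 2*(p2*(q1-q2)))*RR (Suc n) p2 q2
      - (q1*q1*(p2*(RR n p1 q1 - RR n p2 q2)) + (q1+q2)*(p2*(q1-q2))*RR n p2 q2)"
    by (simp add: algebra_simps)
  have a1: "0 \<le> v (p1*p1-2*q1)" using R1 by (intro Rdiff Rmult Rnum)
  have a2: "0 \<le> v ((p1+p2)*p2)" "0 \<le> v (q1*q1)" "0 \<le> v (q1+q2)"
    using R1 R2 by (auto intro: Rmult Radd)
  have a3: "0 \<le> v (RR k p2 q2)" for k using R2 by (intro RR_R)
  have b1: "m \<le> v (((p1+p2)*p2)*(p1-p2) - 2*(p2*(q1-q2)))"
    by (rule Jdiff[OF Jmult[OF a2(1) hp] Jmult[OF Rnum hq]])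
  have b2: "m \<le> v ((q1+q2)*(p2*(q1-q2)))" by (rule Jmult[OF a2(3) hq])
  show ?case unfolding id
    by (rule Jdiff[OF Jadd[OF Jmult[OF a1 ge2(2)] Jmult2[OF a3 b1]]
                      Jadd[OF Jmult[OF a2(2) ge2(1)] Jmult2[OF a3 b2]]])
qed

lemma odd_case:
  assumes Ra: "0 \<le> v a" and Rb: "0 \<le> v b" and Rc: "0 \<le> v c" and Rd: "0 \<le> v d"
    and hp: "m \<le> v ((a+b)-(c+d))" and hq: "m \<le> v ((c+d)*(a*b - c*d))"
  shows "m \<le> v ((a^(2*n+1)+b^(2*n+1)) - (c^(2*n+1)+d^(2*n+1)))"
proof -
  have E: "m \<le> v ((c+d)*(RR n (a+b) (a*b) - RR n (c+d) (c*d)))"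
    by (rule E_lemma[OF Radd[OF Ra Rb] Rmult[OF Ra Rb] Radd[OF Rc Rd] Rmult[OF Rc Rd] hp hq])
  have id: "(a^(2*n+1)+b^(2*n+1)) - (c^(2*n+1)+d^(2*n+1))
     = RR n (a+b) (a*b) * ((a+b)-(c+d)) + (c+d)*(RR n (a+b) (a*b) - RR n (c+d) (c*d))"
    unfolding RR_eq by (simp add: algebra_simps)
  have r: "0 \<le> v (RR n (a+b) (a*b))" using Ra Rb by (intro RR_R Radd Rmult)
  show ?thesis unfolding id by (rule Jadd[OF Jmult[OF r hp] E])
qed

lemma core:
  assumes ua: "v a = 0" and ub: "v b = 0" and uc: "v c = 0" and ud: "v d = 0"
    and hs: "m \<le> v (a + b - c - d)"
    and ht: "m \<le> v (inverse a + inverse b - inverse c - inverse d)"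
    and hk: "v (a+b) = 0 \<or> odd k"
  shows "m \<le> v (a^k + b^k - c^k - d^k)"
proof -
  have nz: "a \<noteq> 0" "b \<noteq> 0" "c \<noteq> 0" "d \<noteq> 0" using ua ub uc ud v0 by auto
  have R: "0 \<le> v a" "0 \<le> v b" "0 \<le> v c" "0 \<le> v d" using ua ub uc ud by auto
  have hp: "m \<le> v ((a+b)-(c+d))" using hs by (simp add: algebra_simps)
  define t where "t = inverse a + inverse b - inverse c - inverse d"
  define X where "X = (a+b)*(c*d) - (c+d)*(a*b)"
  have "X = t * (a*b) * (c*d)" unfolding X_def t_def using nz
    by (simp add: field_simps)
  then have "v X = v t" by (simp add: vmult ua ub uc ud)
  then have hX: "m \<le> v X" using ht t_def by simp
  have main: "m \<le> v ((a^k+b^k) - (c^k+d^k))"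
    using hk
  proof
    assume u: "v (a+b) = 0"
    have "(a+b)*(a*b - c*d) = (a*b)*((a+b)-(c+d)) - X" unfolding X_def by (simp add: algebra_simps)
    moreover have "m \<le> v ((a*b)*((a+b)-(c+d)) - X)"
      by (rule Jdiff[OF Jmult[OF Rmult[OF R(1) R(2)] hp] hX])
    ultimately have "m \<le> v ((a+b)*(a*b - c*d))" by simp
    then have hq: "m \<le> v (a*b - c*d)" using u by (simp add: vmult)
    show ?thesis using unit_case[OF R hp hq] by blast
  next
    assume "odd k"
    then obtain n where kn: "k = 2*n+1" using oddE by blast
    have "(c+d)*(a*b - c*d) = (c*d)*((a+b)-(c+d)) - X" unfolding X_def by (simp add: algebra_simps)
    moreover have "m \<le> v ((c*d)*((a+b)-(c+d)) - X)"
      by (rule Jdiff[OF Jmult[OF Rmult[OF R(3) R(4)] hp] hX])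
    ultimately have hq: "m \<le> v ((c+d)*(a*b - c*d))" by simp
    show ?thesis unfolding kn by (rule odd_case[OF R hp hq])
  qed
  then show ?thesis by (simp add: algebra_simps)
qed

lemma int_case:
  assumes ua: "v a = 0" and ub: "v b = 0" and uc: "v c = 0" and ud: "v d = 0"
    and hs: "m \<le> v (a + b - c - d)"
    and ht: "m \<le> v (inverse a + inverse b - inverse c - inverse d)"
    and hk: "v (a+b) = 0 \<or> odd l"
  shows "m \<le> v (a powi l + b powi l - c powi l - d powi l)"
proof (cases "l \<ge> 0")
  case True
  then obtain k where lk: "l = int k" using nonneg_eq_int by blast
  have "v (a+b) = 0 \<or> odd k" using hk lk by simp
  from core[OF ua ub uc ud hs ht this] show ?thesis unfolding lk by simp
next
  case False
  then obtain k where lk: "l = - int k" by (metis neg_0_le_iff_le nonneg_eq_int le_cases minus_minus)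
  have nz: "a \<noteq> 0" "b \<noteq> 0" using ua ub v0 by auto
  have "inverse a + inverse b = (a+b) * inverse a * inverse b" using nz by (simp add: field_simps)
  then have "v (a+b) = 0 \<Longrightarrow> v (inverse a + inverse b) = 0"
    by (simp add: vmult units_inv ua ub)
  then have "v (inverse a + inverse b) = 0 \<or> odd k" using hk lk by auto
  from core[OF units_inv[OF ua] units_inv[OF ub] units_inv[OF uc] units_inv[OF ud] ht _ this] hs
  show ?thesis unfolding lk by (simp add: power_int_minus power_inverse)
qed

end

theorem lemma12p2:
  fixes v :: "'a::field_char_0 \<Rightarrow> ereal"
    and \<alpha>1 \<alpha>2 \<alpha>3 \<alpha>4 :: 'a
  assumes "nonarch_local_field v"
    and "odd_residue_char v"
    and "\<alpha>1 \<in> val_units v" "\<alpha>2 \<in> val_units v" "\<alpha>3 \<in> val_units v" "\<alpha>4 \<in> val_units v"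
  shows "(\<forall>l::int. odd l \<longrightarrow>
            min (v (\<alpha>1 + \<alpha>2 - \<alpha>3 - \<alpha>4))
                (v (inverse \<alpha>1 + inverse \<alpha>2 - inverse \<alpha>3 - inverse \<alpha>4))
            \<le> v (\<alpha>1 powi l + \<alpha>2 powi l - \<alpha>3 powi l - \<alpha>4 powi l))
       \<and> (\<alpha>1 + \<alpha>2 \<in> val_units v \<longrightarrow>
          (\<forall>l::int.
            min (v (\<alpha>1 + \<alpha>2 - \<alpha>3 - \<alpha>4))
                (v (inverse \<alpha>1 + inverse \<alpha>2 - inverse \<alpha>3 - inverse \<alpha>4))
            \<le> v (\<alpha>1 powi l + \<alpha>2 powi l - \<alpha>3 powi l - \<alpha>4 powi l)))"
proof -
  have nv: "normalised_discrete_valuation v" using assms(1) unfolding nonarch_local_field_def by blast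
  have u: "v \<alpha>1 = 0" "v \<alpha>2 = 0" "v \<alpha>3 = 0" "v \<alpha>4 = 0" using assms(3-6) unfolding val_units_def by auto
  show ?thesis unfolding val_units_def
    using int_case[OF nv u, of "min (v (\<alpha>1 + \<alpha>2 - \<alpha>3 - \<alpha>4))
                (v (inverse \<alpha>1 + inverse \<alpha>2 - inverse \<alpha>3 - inverse \<alpha>4))"] by auto
qed

end
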